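(* Let $T_1,\dots,T_n$ be i.i.d. nonnegative random variables whose distribution function satisfies $F_T(x)=f_T(0)x+o(x^{4/3})$ as $x\downarrow0$, with $f_T(0)\in(0,\infty)$; let $S$ be a nonnegative random variable independent of the $T_i$ with $\mathbb E[S^2]<\infty$, let $\beta\in\mathbb R$, $D:=\frac{S}{n}(1+\beta n^{-1/3})$ and $A_n':=\sum_{i=1}^n\mathbf 1\{T_i\le D\}$. Then there exist random variables $Y_n$ such that $(A_n')^2$ is stochastically dominated by $Y_n$ for every $n$ and the family $(Y_n)_{n\ge1}$ is uniformly integrable. In particular, for every $\varepsilon>0$, $$\mathbb E\big[(A_n')^2\mathbf 1\{(A_n')^2>\varepsilon n^{2/3}\}\big]\to0\qquad(n\to\infty).$$
   Context: A real random variable $Y$ is stochastically dominated by $X$ if $\mathbb P(X\le x)\le\mathbb P(Y\le x)$ for all $x\in\mathbb R$. *)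

theory Defs
  imports "HOL-Probability.Probability" "HOL-Library.Landau_Symbols"
begin

text \<open>The random variable A'_n (we index T_0, ..., T_(n-1) instead of T_1, ..., T_n).\<close>
definition A_count :: "(nat \<Rightarrow> 'a \<Rightarrow> real) \<Rightarrow> ('a \<Rightarrow> real) \<Rightarrow> real \<Rightarrow> nat \<Rightarrow> 'a \<Rightarrow> real" where
  "A_count T S \<beta> n \<omega> =
     real (card {i. i < n \<and> T i \<omega> \<le> S \<omega> / real n * (1 + \<beta> * real n powr (-1/3))})"

text \<open>A real random variable Y is stochastically dominated by X iff
  P(X \<le> x) \<le> P(Y \<le> x) for all x. Here X is given by its law \<mu> and Y = Z on M.\<close>
definition stoch_dominated_by_law :: "'a measure \<Rightarrow> ('a \<Rightarrow> real) \<Rightarrow> real measure \<Rightarrow> bool" where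
  "stoch_dominated_by_law M Z \<mu> \<longleftrightarrow>
     (\<forall>x::real. measure \<mu> {..x} \<le> measure M {\<omega> \<in> space M. Z \<omega> \<le> x})"

definition uniformly_integrable_laws :: "(nat \<Rightarrow> real measure) \<Rightarrow> bool" where
  "uniformly_integrable_laws \<mu> \<longleftrightarrow>
     ((\<lambda>K::real. SUP n\<in>{1..}. \<integral>\<^sup>+ y. ennreal (\<bar>y\<bar> * indicator {y. \<bar>y\<bar> > K} y) \<partial>\<mu> n)
        \<longlongrightarrow> 0) at_top"

end

theory Submission
  imports Defs "HOL-Real_Asymp.Real_Asymp"
begin

lemma exp_bound: fixes y :: real assumes "0 \<le> y" shows "y ^ k / fact k \<le> exp y"
proof -
  have "(\<lambda>n. y^n /\<^sub>R fact n) sums exp y" by (rule exp_converges)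
  hence s: "summable (\<lambda>n. y^n / fact n)" and e: "exp y = (\<Sum>n. y^n / fact n)"
    by (auto simp: sums_iff divide_inverse mult.commute scaleR_conv_of_real)
  have "y ^ k / fact k = (\<Sum>n\<in>{k}. y^n / fact n)" by simp
  also have "\<dots> \<le> (\<Sum>n. y^n / fact n)"
    by (rule sum_le_suminf[OF s]) (use assms in auto)
  finally show ?thesis using e by simp
qed

lemma sum_half: "j \<le> n \<Longrightarrow> (\<Sum>k\<in>{j<..n}. (1/2::real)^k) = (1/2)^j - (1/2)^n"
proof (induction n rule: dec_induct)
  case base then show ?case by simp
next
  case (step n)
  have "{j<..Suc n} = insert (Suc n) {j<..n}" using step by auto
  then show ?case using step by simp
qed

lemma sq_sum: "j \<le> N \<Longrightarrow> N \<le> n \<Longrightarrow>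
  real N ^ 2 \<le> real j ^ 2 + (\<Sum>k\<in>{j<..n}. 2 * real k * (if k \<le> N then 1 else 0))"
proof -
  assume a: "j \<le> N" "N \<le> n"
  have eq: "(\<Sum>k\<in>{j<..n}. 2 * real k * (if k \<le> N then 1 else 0)) = (\<Sum>k\<in>{j<..N}. 2 * real k)"
  proof -
    have "(\<Sum>k\<in>{j<..n}. 2 * real k * (if k \<le> N then 1 else 0)) = (\<Sum>k\<in>{j<..n} \<inter> {..N}. 2 * real k)"
      by (simp add: sum.inter_restrict if_distrib cong: if_cong)
    also have "{j<..n} \<inter> {..N} = {j<..N}" using a by auto
    finally show ?thesis .
  qed
  have "real N ^ 2 \<le> real j ^ 2 + (\<Sum>k\<in>{j<..N}. 2 * real k)"
    using a(1)
  proof (induction N rule: dec_induct)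
    case base then show ?case by simp
  next
    case (step m)
    have "{j<..Suc m} = insert (Suc m) {j<..m}" using step by auto
    then show ?case using step by (simp add: power2_eq_square algebra_simps)
  qed
  then show ?thesis using eq by simp
qed

lemma gauss2: "(\<Sum>k<m. 2 * real k) = real m * (real m - 1)"
  by (induction m) (auto simp: algebra_simps)

lemma sum_lt_bound: fixes t :: real assumes "0 \<le> t" "finite F"
  shows "(\<Sum>k\<in>F. 2 * real k * (if real k < t then 1 else 0)) \<le> t * (t + 1)"
proof -
  define m where "m = nat \<lceil>t\<rceil>"
  have "(\<Sum>k\<in>F. 2 * real k * (if real k < t then 1 else 0)) = (\<Sum>k\<in>F \<inter> {k. real k < t}. 2 * real k)"
    using assms(2) by (simp add: sum.inter_restrict if_distrib cong: if_cong)
  also have "\<dots> \<le> (\<Sum>k<m. 2 * real k)"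
  proof (rule sum_mono2)
    show "F \<inter> {k. real k < t} \<subseteq> {..<m}" 
    proof
      fix x assume "x \<in> F \<inter> {k. real k < t}"
      hence "of_int (int x) < t" by simp
      hence "int x < \<lceil>t\<rceil>" by (simp only: less_ceiling_iff)
      thus "x \<in> {..<m}" unfolding m_def by simp
    qed
  qed auto
  also have "\<dots> = real m * (real m - 1)" by (rule gauss2)
  also have "\<dots> \<le> t * (t + 1)"
  proof (cases "m = 0")
    case True then show ?thesis using assms by simp
  next
    case False
    have "real m < t + 1" unfolding m_def using assms by linarith
    moreover have "real m \<ge> 1" using False by simp
    ultimately have "real m * (real m - 1) \<le> (t + 1) * t" using assms by (intro mult_mono) auto
    thus ?thesis by (simp add: mult.commute)
  qed
  finally show ?thesis .
qed

lemma lim_j2: "(\<lambda>j::nat. real j ^ 2 * (1/4::real)^j) \<longlonglongrightarrow> 0"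
  by real_asymp




lemma abs_le_one_plus_sq: "\<bar>s::real\<bar> \<le> 1 + s\<^sup>2"
proof -
  have "0 \<le> (\<bar>s\<bar> - 1)^2" by simp
  hence "2 * \<bar>s\<bar> \<le> 1 + s^2" by (simp add: power2_eq_square algebra_simps abs_mult_self_eq)
  thus ?thesis by simp
qed

lemma integral_ind_combo:
  assumes "prob_space M" "\<And>k. E k \<in> sets M" "finite I"
  shows "(\<integral>\<omega>. c * indicator (E j) \<omega> + (\<Sum>k\<in>I. d k * indicator (E k) \<omega>) \<partial>M)
         = c * measure M (E j) + (\<Sum>k\<in>I. d k * measure M (E k))"
    and "integrable M (\<lambda>\<omega>. c * indicator (E j) \<omega> + (\<Sum>k\<in>I. d k * indicator (E k) \<omega>) :: real)"
proof -
  interpret prob_space M by fact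
  have i: "integrable M (\<lambda>\<omega>. c' * indicator (E k) \<omega> :: real)" for c' k
    using assms(2) by (intro Bochner_Integration.integrable_mult_right integrable_real_indicator) (auto simp: emeasure_finite less_top[symmetric])
  have isum: "integrable M (\<lambda>\<omega>. \<Sum>k\<in>I. d k * indicator (E k) \<omega> :: real)"
    using i by (intro Bochner_Integration.integrable_sum) auto
  have sp: "E k \<inter> space M = E k" for k using assms(2) sets.sets_into_space by blast
  show "integrable M (\<lambda>\<omega>. c * indicator (E j) \<omega> + (\<Sum>k\<in>I. d k * indicator (E k) \<omega>) :: real)"
    using i isum by (rule Bochner_Integration.integrable_add)
  have "(\<integral>\<omega>. c * indicator (E j) \<omega> + (\<Sum>k\<in>I. d k * indicator (E k) \<omega>) \<partial>M)
     = (\<integral>\<omega>. c * indicator (E j) \<omega> \<partial>M) + (\<integral>\<omega>. (\<Sum>k\<in>I. d k * indicator (E k) \<omega>) \<partial>M)"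
    using i isum by (rule Bochner_Integration.integral_add)
  also have "\<dots> = c * measure M (E j) + (\<Sum>k\<in>I. d k * measure M (E k))"
    apply (simp only: Bochner_Integration.integral_sum[OF i] integral_mult_right_zero)
    apply (simp add: sp)
    done
  finally show "(\<integral>\<omega>. c * indicator (E j) \<omega> + (\<Sum>k\<in>I. d k * indicator (E k) \<omega>) \<partial>M)
         = c * measure M (E j) + (\<Sum>k\<in>I. d k * measure M (E k))" .
qed

theorem mainTheorem9:
  fixes M :: "'a measure" and T :: "nat \<Rightarrow> 'a \<Rightarrow> real" and S :: "'a \<Rightarrow> real"
    and fT0 :: real and \<beta> :: real
  assumes "prob_space M"
    and T_meas: "\<And>i. T i \<in> borel_measurable M"
    and S_meas: "S \<in> borel_measurable M"
    and T_nonneg: "\<And>i \<omega>. \<omega> \<in> space M \<Longrightarrow> T i \<omega> \<ge> 0"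
    and S_nonneg: "\<And>\<omega>. \<omega> \<in> space M \<Longrightarrow> S \<omega> \<ge> 0"
    and indep: "prob_space.indep_vars M (\<lambda>_. borel)
                  (\<lambda>j. case j of None \<Rightarrow> S | Some i \<Rightarrow> T i) UNIV"
    and ident: "\<And>i. distr M borel (T i) = distr M borel (T 0)"
    and fT0: "0 < fT0"
    and cdf: "(\<lambda>x. measure M {\<omega> \<in> space M. T 0 \<omega> \<le> x} - fT0 * x)
                \<in> o[at_right 0](\<lambda>x. x powr (4/3))"
    and S2: "integrable M (\<lambda>\<omega>. (S \<omega>)\<^sup>2)"
  shows "(\<exists>\<mu> :: nat \<Rightarrow> real measure.
            (\<forall>n\<ge>1. prob_space (\<mu> n) \<and> sets (\<mu> n) = sets borel \<and>
                    stoch_dominated_by_law M (\<lambda>\<omega>. (A_count T S \<beta> n \<omega>)\<^sup>2) (\<mu> n))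
            \<and> uniformly_integrable_laws \<mu>)
       \<and> (\<forall>\<epsilon>>0. (\<lambda>n. prob_space.expectation M
               (\<lambda>\<omega>. (A_count T S \<beta> n \<omega>)\<^sup>2 *
                  indicator {\<omega>. (A_count T S \<beta> n \<omega>)\<^sup>2 > \<epsilon> * real n powr (2/3)} \<omega>))
             \<longlonglongrightarrow> 0)"
proof -
  interpret P: prob_space M by fact
  note [measurable] = T_meas S_meas
  define F where "F x = measure M {\<omega>\<in>space M. T 0 \<omega> \<le> x}" for x
  define b where "b = 1 + \<bar>\<beta>\<bar>"
  have b_pos: "b \<ge> 1" unfolding b_def by simp
  define A where "A n \<omega> = A_count T S \<beta> n \<omega>" for n \<omega>
  have Fi': "measure M {\<omega>\<in>space M. T i \<omega> \<le> x} = measure (distr M borel (T i)) {..x}" for i x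
  proof -
    have e: "{\<omega>\<in>space M. T i \<omega> \<le> x} = T i -` {..x} \<inter> space M" by auto
    show ?thesis unfolding e by (rule measure_distr[symmetric]) auto
  qed
  have Fi: "measure M {\<omega>\<in>space M. T i \<omega> \<le> x} = F x" for i x
    unfolding F_def Fi' ident[of i] ..
  have F_le1: "F x \<le> 1" for x unfolding F_def by simp
  obtain C where C: "C > 0" "\<And>x. x > 0 \<Longrightarrow> F x \<le> C * x"
  proof -
    have "eventually (\<lambda>x. norm (F x - fT0 * x) \<le> 1 * norm (x powr (4/3))) (at_right 0)"
      using landau_o.smallD[OF cdf[folded F_def], of 1] by simp
    then obtain d where d: "d > 0" "\<And>y. y > 0 \<Longrightarrow> y < d \<Longrightarrow> \<bar>F y - fT0 * y\<bar> \<le> \<bar>y powr (4/3)\<bar>"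
      unfolding eventually_at_right_field by auto
    define d' where "d' = min d 1"
    have d': "d' > 0" "d' \<le> 1" "d' \<le> d" unfolding d'_def using d by auto
    define C where "C = max (fT0 + 1) (1 / d')"
    show ?thesis
    proof (rule that[of C])
      show "C > 0" unfolding C_def using fT0 by auto
      fix x :: real assume x: "x > 0"
      show "F x \<le> C * x"
      proof (cases "x < d'")
        case True
        have "x powr (4/3) \<le> x powr 1"
          using x True d' by (intro powr_mono') auto
        hence "\<bar>x powr (4/3)\<bar> \<le> x" using x by simp
        with d(2)[of x] True d' x have "F x \<le> fT0 * x + x" by auto
        also have "\<dots> = (fT0 + 1) * x" by (simp add: algebra_simps)
        also have "\<dots> \<le> C * x" unfolding C_def using x by (intro mult_right_mono) auto
        finally show ?thesis .
      next
        case False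
        have "F x \<le> 1" by (rule F_le1)
        also have "1 \<le> (1/d') * x" using False d' by (simp add: field_simps)
        also have "\<dots> \<le> C * x" unfolding C_def using x by (intro mult_right_mono) auto
        finally show ?thesis .
      qed
    qed
  qed
  have A_sum: "A n \<omega> = (\<Sum>i<n. if T i \<omega> \<le> S \<omega> / real n * (1 + \<beta> * real n powr (-1/3)) then 1 else 0)" for n \<omega>
  proof -
    let ?P = "\<lambda>i. T i \<omega> \<le> S \<omega> / real n * (1 + \<beta> * real n powr (-1/3))"
    have "A n \<omega> = real (card ({..<n} \<inter> {i. ?P i}))" unfolding A_def A_count_def
      by (simp add: Int_def conj_commute)
    also have "\<dots> = (\<Sum>i\<in>{..<n} \<inter> {i. ?P i}. 1)" by simp
    also have "\<dots> = (\<Sum>i<n. if ?P i then 1 else 0)" by (subst sum.inter_restrict) auto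
    finally show ?thesis .
  qed
  have A_meas[measurable]: "A n \<in> borel_measurable M" for n
  proof -
    define c where "c = 1 + \<beta> * real n powr (-1/3)"
    have D: "(\<lambda>\<omega>. S \<omega> / real n * c) \<in> borel_measurable M"
      by (intro borel_measurable_times borel_measurable_divide S_meas borel_measurable_const)
    have e: "A n = (\<lambda>\<omega>. \<Sum>i<n. indicator {\<omega>. T i \<omega> \<le> S \<omega> / real n * c} \<omega>)"
      by (rule ext) (simp only: A_sum indicator_def mem_Collect_eq c_def of_bool_def)
    show ?thesis unfolding e
    proof (intro borel_measurable_sum)
      fix i
      have "{\<omega>. T i \<omega> \<le> S \<omega> / real n * c} \<inter> space M = {\<omega>\<in>space M. T i \<omega> \<le> S \<omega> / real n * c}" by auto
      also have "\<dots> \<in> sets M" using D T_meas[of i] by (rule borel_measurable_le[rotated])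
      finally show "(indicator {\<omega>. T i \<omega> \<le> S \<omega> / real n * c} :: 'a \<Rightarrow> real) \<in> borel_measurable M"
        by (simp only: borel_measurable_indicator_iff)
    qed
  qed
  have A_nat: "\<exists>N. A n \<omega> = real N \<and> N \<le> n" for n \<omega>
  proof -
    have "card {i. i < n \<and> T i \<omega> \<le> S \<omega> / real n * (1 + \<beta> * real n powr (-1/3))} \<le> card {..<n}"
      by (rule card_mono) auto
    thus ?thesis unfolding A_def A_count_def by auto
  qed
  define X where "X = (\<lambda>j. case j of None \<Rightarrow> S | Some i \<Rightarrow> T i)"
  have indep': "P.indep_vars (\<lambda>_. borel) X UNIV" using indep unfolding X_def .
  define a where "a = 1 / (16 * C * b)"
  have a_pos: "a > 0" using C b_pos unfolding a_def by auto
  have tail: "P.prob {\<omega>\<in>space M. real k \<le> A n \<omega>} \<le> P.prob {\<omega>\<in>space M. a * real k < S \<omega>} + (1/4)^k"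
    if n: "n \<ge> 1" and k: "k \<ge> 1" for n k
  proof -
    define s where "s = a * real k"
    define x where "x = s * b / real n"
    have s_pos: "s > 0" unfolding s_def using a_pos k by simp
    have x_pos: "x > 0" unfolding x_def using s_pos b_pos n by simp
    define E where "E I = {\<omega>\<in>space M. \<forall>i\<in>I. T i \<omega> \<le> x}" for I
    define II where "II = {I. I \<subseteq> {..<n} \<and> card I = k}"
    have finII: "finite II" unfolding II_def by (rule finite_subset[of _ "Pow {..<n}"]) auto
    have cardII: "card II = n choose k" unfolding II_def using n_subsets[of "{..<n}" k] by simp
    have E_sets: "E I \<in> sets M" if "finite I" for I
      unfolding E_def using that by measurable
    have E_prob: "P.prob (E I) = F x ^ k" if I: "I \<in> II" for I
    proof -
      have Ifin: "finite I" using I unfolding II_def by (auto intro: finite_subset)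
      have Ine: "I \<noteq> {}" using I k unfolding II_def by auto
      have cI: "card I = k" using I unfolding II_def by auto
      have "E I = (\<Inter>j\<in>Some ` I. X j -` {..x} \<inter> space M)"
        unfolding E_def X_def using Ine by auto
      hence "P.prob (E I) = (\<Prod>j\<in>Some ` I. P.prob (X j -` {..x} \<inter> space M))"
        using P.indep_varsD[OF indep', of "Some ` I" "\<lambda>_. {..x}"] Ine Ifin by simp
      also have "\<dots> = (\<Prod>i\<in>I. P.prob (T i -` {..x} \<inter> space M))"
        by (subst prod.reindex) (auto simp: X_def)
      also have "\<dots> = (\<Prod>i\<in>I. F x)"
      proof (rule prod.cong)
        fix i assume "i \<in> I"
        have "T i -` {..x} \<inter> space M = {\<omega>\<in>space M. T i \<omega> \<le> x}" by auto
        thus "P.prob (T i -` {..x} \<inter> space M) = F x" using Fi by simp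
      qed simp
      also have "\<dots> = F x ^ k" using cI by simp
      finally show ?thesis .
    qed
    have cb: "1 + \<beta> * real n powr (-1/3) \<le> b"
    proof -
      have p0: "0 \<le> real n powr (-1/3)" by simp
      have p1: "real n powr (-1/3) \<le> 1" using powr_mono[of "-1/3" 0 "real n"] n by simp
      have "\<beta> * real n powr (-1/3) \<le> \<bar>\<beta>\<bar> * real n powr (-1/3)" using p0 by (intro mult_right_mono) auto
      also have "\<dots> \<le> \<bar>\<beta>\<bar>" using p0 p1 by (simp add: mult_left_le)
      finally show ?thesis unfolding b_def by simp
    qed
    have incl: "{\<omega>\<in>space M. real k \<le> A n \<omega>} \<subseteq> {\<omega>\<in>space M. s < S \<omega>} \<union> (\<Union>I\<in>II. E I)"
    proof
      fix \<omega> assume w: "\<omega> \<in> {\<omega>\<in>space M. real k \<le> A n \<omega>}"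
      show "\<omega> \<in> {\<omega>\<in>space M. s < S \<omega>} \<union> (\<Union>I\<in>II. E I)"
      proof (cases "s < S \<omega>")
        case True then show ?thesis using w by auto
      next
        case False
        define J where "J = {i. i < n \<and> T i \<omega> \<le> S \<omega> / real n * (1 + \<beta> * real n powr (-1/3))}"
        have "k \<le> card J" using w unfolding A_def A_count_def J_def by auto
        then obtain I where I: "I \<subseteq> J" "card I = k" "finite I" by (rule obtain_subset_with_card_n)
        have "I \<in> II" using I unfolding II_def J_def by auto
        moreover have "\<omega> \<in> E I"
        proof -
          have Sw: "0 \<le> S \<omega>" "S \<omega> \<le> s" using S_nonneg w False by auto
          have "S \<omega> / real n * (1 + \<beta> * real n powr (-1/3)) \<le> S \<omega> / real n * b"
            using Sw cb by (intro mult_left_mono) auto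
          also have "\<dots> \<le> s / real n * b" using Sw b_pos
            by (intro mult_right_mono divide_right_mono) auto
          also have "\<dots> = x" unfolding x_def by simp
          finally have "S \<omega> / real n * (1 + \<beta> * real n powr (-1/3)) \<le> x" .
          thus ?thesis using I w unfolding E_def J_def by force
        qed
        ultimately show ?thesis by auto
      qed
    qed
    have IIfin: "finite I" if "I \<in> II" for I using that unfolding II_def by (auto intro: finite_subset)
    have UN_sets: "(\<Union>I\<in>II. E I) \<in> sets M"
      using finII E_sets IIfin by (intro sets.finite_UN) auto
    have S_set: "{\<omega>\<in>space M. s < S \<omega>} \<in> sets M" by measurable
    have "P.prob {\<omega>\<in>space M. real k \<le> A n \<omega>} \<le> P.prob ({\<omega>\<in>space M. s < S \<omega>} \<union> (\<Union>I\<in>II. E I))"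
      using incl UN_sets S_set by (intro P.finite_measure_mono) auto
    also have "\<dots> \<le> P.prob {\<omega>\<in>space M. s < S \<omega>} + P.prob (\<Union>I\<in>II. E I)"
      using UN_sets S_set by (intro measure_Un_le) auto
    also have "P.prob (\<Union>I\<in>II. E I) \<le> (\<Sum>I\<in>II. P.prob (E I))"
      using finII E_sets IIfin by (intro P.finite_measure_subadditive_finite) auto
    also have "(\<Sum>I\<in>II. P.prob (E I)) = real (n choose k) * F x ^ k"
      using E_prob cardII by simp
    also have "real (n choose k) * F x ^ k \<le> (1/4)^k"
    proof -
      have Fx: "0 \<le> F x" "F x \<le> C * x" using C x_pos unfolding F_def by auto
      have bin: "real (n choose k) \<le> real n ^ k / fact k"
      proof -
        have "real ((n choose k) * fact k) \<le> real (n ^ k)"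
          using binomial_fact_pow[of n k] by (simp only: of_nat_le_iff)
        thus ?thesis by (simp add: field_simps)
      qed
      have "real (n choose k) * F x ^ k \<le> (real n ^ k / fact k) * (C * x) ^ k"
        using bin Fx by (intro mult_mono power_mono) auto
      also have "\<dots> = (C * x * real n) ^ k / fact k" by (simp add: power_mult_distrib field_simps)
      also have "C * x * real n = real k / 16"
        unfolding x_def s_def a_def using n C b_pos by (simp add: field_simps)
      also have "(real k / 16) ^ k / fact k = ((real k / 2) ^ k / fact k) / 8 ^ k"
        by (simp add: power_divide field_simps flip: power_mult_distrib)
      also have "\<dots> \<le> exp (real k / 2) / 8 ^ k"
        by (intro divide_right_mono exp_bound) auto
      also have "exp (real k / 2) = exp (1/2) ^ k" by (simp add: exp_of_nat_mult[symmetric])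
      also have "exp (1/2::real) ^ k / 8 ^ k \<le> 2 ^ k / 8 ^ k"
      proof -
        have "exp (1/2::real) \<le> 2" using exp_bound_half[of "1/2::real"] by simp
        thus ?thesis by (intro divide_right_mono power_mono) auto
      qed
      also have "(2::real) ^ k / 8 ^ k = (1/4) ^ k" by (simp add: power_divide[symmetric])
      finally show ?thesis .
    qed
    finally show ?thesis unfolding s_def by simp
  qed
  define q where "q k = P.prob {\<omega>\<in>space M. a * real k < S \<omega>}" for k :: nat
  define Sk where "Sk k = {\<omega>\<in>space M. a * real k < S \<omega>}" for k :: nat
  have Sk_sets: "Sk k \<in> sets M" for k unfolding Sk_def by measurable
  define g where "g \<omega> = 3 * (S \<omega> / a)^2 + 2 * (S \<omega> / a)" for \<omega>
  define Bd where "Bd j = P.expectation (\<lambda>\<omega>. g \<omega> * indicator (Sk j) \<omega>) + real j ^ 2 * (1/4)^j + 2 * (1/2)^j" for j :: nat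
  have S_int: "integrable M S"
  proof (rule Bochner_Integration.integrable_bound[OF Bochner_Integration.integrable_add[OF P.integrable_const[of 1] S2]])
    show "AE x in M. norm (S x) \<le> norm (1 + (S x)\<^sup>2)"
      by (intro AE_I2) (simp add: abs_le_one_plus_sq)
  qed simp
  have g_eq: "g = (\<lambda>\<omega>. (3 / a^2) * (S \<omega>)^2 + (2 / a) * S \<omega>)"
    unfolding g_def by (auto simp: fun_eq_iff power_divide)
  have g_int: "integrable M g" unfolding g_eq
    by (intro Bochner_Integration.integrable_add Bochner_Integration.integrable_mult_right S2 S_int)
  have g_nonneg: "0 \<le> g \<omega>" if "\<omega> \<in> space M" for \<omega>
    unfolding g_def using S_nonneg[OF that] a_pos by simp
  have main: "P.expectation (\<lambda>\<omega>. (A n \<omega>)^2 * indicator {\<omega>. (A n \<omega>)^2 > K} \<omega>) \<le> Bd (nat \<lfloor>sqrt K\<rfloor> + 1)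
     \<and> integrable M (\<lambda>\<omega>. (A n \<omega>)^2 * indicator {\<omega>. (A n \<omega>)^2 > K} \<omega>)"
    if n: "n \<ge> 1" and K: "K \<ge> 0" for n K
  proof -
    define j where "j = nat \<lfloor>sqrt K\<rfloor> + 1"
    have j1: "j \<ge> 1" unfolding j_def by simp
    define Ek where "Ek k = {\<omega>\<in>space M. real k \<le> A n \<omega>}" for k
    have Ek_sets: "Ek k \<in> sets M" for k unfolding Ek_def by measurable
    define R where "R \<omega> = real j^2 * indicator (Ek j) \<omega> + (\<Sum>k\<in>{j<..n}. 2 * real k * indicator (Ek k) \<omega>)" for \<omega>
    have L_eq: "(\<lambda>\<omega>. (A n \<omega>)^2 * indicator {\<omega>. (A n \<omega>)^2 > K} \<omega>) = (\<lambda>\<omega>. if K < (A n \<omega>)^2 then (A n \<omega>)^2 else 0)"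
      by (auto simp: fun_eq_iff indicator_def)
    have L_int: "integrable M (\<lambda>\<omega>. (A n \<omega>)^2 * indicator {\<omega>. (A n \<omega>)^2 > K} \<omega>)"
      unfolding L_eq
    proof (rule P.integrable_const_bound[where B="real n ^ 2"])
      show "AE x in M. norm (if K < (A n x)\<^sup>2 then (A n x)\<^sup>2 else 0) \<le> real n ^ 2"
      proof (intro AE_I2)
        fix x
        obtain N where N: "A n x = real N" "N \<le> n" using A_nat by blast
        show "norm (if K < (A n x)\<^sup>2 then (A n x)\<^sup>2 else 0) \<le> real n ^ 2"
          using N by (auto intro!: power_mono)
      qed
    qed measurable
    have R_int: "integrable M R" unfolding R_def
      by (rule integral_ind_combo(2)[OF \<open>prob_space M\<close> Ek_sets]) simp
    have pw: "(\<lambda>\<omega>. (A n \<omega>)^2 * indicator {\<omega>. (A n \<omega>)^2 > K} \<omega>) \<omega> \<le> R \<omega>" if w: "\<omega> \<in> space M" for \<omega>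
    proof -
      obtain N where N: "A n \<omega> = real N" "N \<le> n" using A_nat by blast
      have ind: "indicator (Ek k) \<omega> = (if k \<le> N then 1 else (0::real))" for k
        unfolding Ek_def using w N by (auto simp: indicator_def)
      have Rw: "R \<omega> = real j^2 * (if j \<le> N then 1 else 0) + (\<Sum>k\<in>{j<..n}. 2 * real k * (if k \<le> N then 1 else 0))"
        unfolding R_def ind ..
      have Rnn: "0 \<le> R \<omega>" unfolding Rw by (intro add_nonneg_nonneg sum_nonneg) auto
      show ?thesis
      proof (cases "K < (A n \<omega>)^2")
        case True
        hence "K < (real N)^2" using N by simp
        hence "sqrt K < real N" using real_less_rsqrt by (metis abs_of_nat real_sqrt_abs real_sqrt_less_mono)
        hence "\<lfloor>sqrt K\<rfloor> < int N" by (simp add: floor_less_iff)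
        moreover have "0 \<le> \<lfloor>sqrt K\<rfloor>" using K by simp
        ultimately have jN: "j \<le> N" unfolding j_def by linarith
        have "(A n \<omega>)^2 = real N ^ 2" using N by simp
        also have "\<dots> \<le> R \<omega>" unfolding Rw using sq_sum[OF jN N(2)] jN by simp
        finally show ?thesis using True by simp
      next
        case False then show ?thesis using Rnn by (simp add: indicator_def)
      qed
    qed
    have "P.expectation (\<lambda>\<omega>. (A n \<omega>)^2 * indicator {\<omega>. (A n \<omega>)^2 > K} \<omega>) \<le> P.expectation R"
      using L_int R_int pw by (intro Bochner_Integration.integral_mono) auto
    also have "P.expectation R = real j^2 * P.prob (Ek j) + (\<Sum>k\<in>{j<..n}. 2 * real k * P.prob (Ek k))"
      unfolding R_def by (rule integral_ind_combo(1)[OF \<open>prob_space M\<close> Ek_sets]) simp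
    also have "\<dots> \<le> real j^2 * (q j + (1/4)^j) + (\<Sum>k\<in>{j<..n}. 2 * real k * (q k + (1/4)^k))"
      unfolding Ek_def q_def using tail[OF n j1] tail[OF n] j1
      by (intro add_mono mult_left_mono sum_mono) auto
    also have "\<dots> = (real j^2 * q j + (\<Sum>k\<in>{j<..n}. 2 * real k * q k)) + (real j^2 * (1/4)^j + (\<Sum>k\<in>{j<..n}. 2 * real k * (1/4)^k))"
      by (simp add: algebra_simps sum.distrib)
    also have "real j^2 * q j + (\<Sum>k\<in>{j<..n}. 2 * real k * q k) \<le> P.expectation (\<lambda>\<omega>. g \<omega> * indicator (Sk j) \<omega>)"
    proof -
      define Q where "Q \<omega> = real j^2 * indicator (Sk j) \<omega> + (\<Sum>k\<in>{j<..n}. 2 * real k * indicator (Sk k) \<omega>)" for \<omega>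
      have Q_int: "integrable M Q" unfolding Q_def
        by (rule integral_ind_combo(2)[OF \<open>prob_space M\<close> Sk_sets]) simp
      have "real j^2 * q j + (\<Sum>k\<in>{j<..n}. 2 * real k * q k) = P.expectation Q"
        unfolding Q_def q_def Sk_def[symmetric] by (rule integral_ind_combo(1)[OF \<open>prob_space M\<close> Sk_sets, symmetric]) simp
      also have "\<dots> \<le> P.expectation (\<lambda>\<omega>. g \<omega> * indicator (Sk j) \<omega>)"
      proof (rule Bochner_Integration.integral_mono)
        show "integrable M (\<lambda>\<omega>. g \<omega> * indicator (Sk j) \<omega>)"
          using g_int Sk_sets by (intro integrable_real_mult_indicator) auto
        fix \<omega> assume w: "\<omega> \<in> space M"
        define t where "t = S \<omega> / a"
        have t0: "0 \<le> t" unfolding t_def using S_nonneg[OF w] a_pos by simp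
        have ind: "indicator (Sk k) \<omega> = (if real k < t then 1 else (0::real))" for k
          unfolding Sk_def t_def using w a_pos by (auto simp: indicator_def field_simps)
        show "Q \<omega> \<le> g \<omega> * indicator (Sk j) \<omega>"
        proof (cases "real j < t")
          case False
          have "Q \<omega> = 0" unfolding Q_def ind using False by (auto intro!: sum.neutral)
          thus ?thesis using g_nonneg[OF w] by simp
        next
          case True
          have "real j^2 \<le> t^2" using True by (intro power_mono) auto
          moreover have "(\<Sum>k\<in>{j<..n}. 2 * real k * (if real k < t then 1 else 0)) \<le> t * (t + 1)"
            by (rule sum_lt_bound[OF t0]) simp
          moreover have "g \<omega> = 3 * t^2 + 2 * t" unfolding g_def t_def ..
          ultimately show ?thesis unfolding Q_def ind using True t0
            by (simp add: power2_eq_square algebra_simps) (use mult_nonneg_nonneg[OF t0 t0] in linarith)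
        qed
      qed (use Q_int in auto)
      finally show ?thesis .
    qed
    also have "real j^2 * (1/4)^j + (\<Sum>k\<in>{j<..n}. 2 * real k * (1/4)^k) \<le> real j^2 * (1/4)^j + 2 * (1/2)^j"
    proof -
      have "(\<Sum>k\<in>{j<..n}. 2 * real k * (1/4::real)^k) \<le> (\<Sum>k\<in>{j<..n}. 2 * (1/2::real)^k)"
      proof (rule sum_mono)
        fix k :: nat
        have "real k \<le> 2^k" using less_exp[of k] by (simp add: of_nat_less_iff[symmetric])
        hence "real k * (1/4::real)^k \<le> 2^k * (1/4)^k" by (intro mult_right_mono) auto
        also have "(2::real)^k * (1/4)^k = (1/2)^k" by (simp add: power_mult_distrib[symmetric])
        finally show "2 * real k * (1/4::real)^k \<le> 2 * (1/2)^k" by simp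
      qed
      also have "\<dots> \<le> 2 * (1/2)^j"
      proof (cases "j \<le> n")
        case True
        then show ?thesis using sum_half[OF True] by (simp add: sum_distrib_left[symmetric])
      next
        case False then show ?thesis by simp
      qed
      finally show ?thesis by simp
    qed
    finally have "P.expectation (\<lambda>\<omega>. (A n \<omega>)^2 * indicator {\<omega>. (A n \<omega>)^2 > K} \<omega>) \<le> Bd j"
      unfolding Bd_def by simp
    thus ?thesis using L_int unfolding j_def by simp
  qed
  define jK where "jK K = nat \<lfloor>sqrt K\<rfloor> + 1" for K :: real
  have lim1: "(\<lambda>j. P.expectation (\<lambda>\<omega>. g \<omega> * indicator (Sk j) \<omega>)) \<longlonglongrightarrow> 0"
  proof -
    have "(\<lambda>j. P.expectation (\<lambda>\<omega>. g \<omega> * indicator (Sk j) \<omega>)) \<longlonglongrightarrow> P.expectation (\<lambda>_. 0)"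
    proof (rule integral_dominated_convergence[where w=g])
      show "(\<lambda>_. 0::real) \<in> borel_measurable M" by simp
      show "(\<lambda>\<omega>. g \<omega> * indicator (Sk j) \<omega>) \<in> borel_measurable M" for j
        using g_int Sk_sets by measurable
      show "integrable M g" by (rule g_int)
      show "AE \<omega> in M. (\<lambda>j. g \<omega> * indicator (Sk j) \<omega>) \<longlonglongrightarrow> 0"
      proof (intro AE_I2)
        fix \<omega> assume w: "\<omega> \<in> space M"
        obtain N :: nat where N: "S \<omega> / a < real N" using reals_Archimedean2 by blast
        show "(\<lambda>j. g \<omega> * indicator (Sk j) \<omega>) \<longlonglongrightarrow> 0"
        proof (rule tendsto_eventually, rule eventually_sequentiallyI[of N])
          fix j assume "N \<le> j"
          hence "S \<omega> / a < real j" using N by linarith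
          hence "\<not> a * real j < S \<omega>" using a_pos by (simp add: field_simps)
          thus "g \<omega> * indicator (Sk j) \<omega> = 0" unfolding Sk_def by simp
        qed
      qed
      show "AE \<omega> in M. norm (g \<omega> * indicator (Sk j) \<omega>) \<le> g \<omega>" for j
        by (intro AE_I2) (auto simp: indicator_def g_nonneg)
    qed
    thus ?thesis by simp
  qed
  have Bd_lim: "Bd \<longlonglongrightarrow> 0"
  proof -
    have l3: "(\<lambda>j. 2 * (1/2::real)^j) \<longlonglongrightarrow> 0"
      using tendsto_mult[OF tendsto_const[of 2] LIMSEQ_power_zero[of "1/2::real"]] by simp
    have "(\<lambda>j. P.expectation (\<lambda>\<omega>. g \<omega> * indicator (Sk j) \<omega>) + real j ^ 2 * (1/4)^j + 2 * (1/2)^j) \<longlonglongrightarrow> 0 + 0 + 0"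
      by (intro tendsto_add lim1 lim_j2 l3)
    thus ?thesis unfolding Bd_def[abs_def] by simp
  qed
  have jK_lim: "filterlim jK sequentially at_top"
    unfolding filterlim_at_top
  proof
    fix Z :: nat
    show "eventually (\<lambda>K. Z \<le> jK K) at_top"
    proof (rule eventually_at_top_linorderI[of "real Z ^ 2"])
      fix K assume K: "real Z ^ 2 \<le> K"
      have "real Z \<le> sqrt K" using real_sqrt_le_mono[OF K] by simp
      hence "int Z \<le> \<lfloor>sqrt K\<rfloor>" by (simp add: le_floor_iff)
      thus "Z \<le> jK K" unfolding jK_def by linarith
    qed
  qed
  have BdK_lim: "((\<lambda>K. Bd (jK K)) \<longlongrightarrow> 0) at_top"
    using filterlim_compose[OF Bd_lim jK_lim] by (simp add: o_def)
  have main': "P.expectation (\<lambda>\<omega>. (A n \<omega>)^2 * indicator {\<omega>. (A n \<omega>)^2 > K} \<omega>) \<le> Bd (jK K)"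
    "integrable M (\<lambda>\<omega>. (A n \<omega>)^2 * indicator {\<omega>. (A n \<omega>)^2 > K} \<omega>)"
    if "n \<ge> 1" "K \<ge> 0" for n K using main[OF that] unfolding jK_def by auto
  define \<mu> where "\<mu> n = distr M borel (\<lambda>\<omega>. (A n \<omega>)^2)" for n
  have part1: "\<forall>n\<ge>1. prob_space (\<mu> n) \<and> sets (\<mu> n) = sets borel \<and>
                    stoch_dominated_by_law M (\<lambda>\<omega>. (A_count T S \<beta> n \<omega>)\<^sup>2) (\<mu> n)"
  proof (intro allI impI conjI)
    fix n :: nat assume "n \<ge> 1"
    show "prob_space (\<mu> n)" unfolding \<mu>_def by (intro P.prob_space_distr) measurable
    show "sets (\<mu> n) = sets borel" unfolding \<mu>_def by simp
    show "stoch_dominated_by_law M (\<lambda>\<omega>. (A_count T S \<beta> n \<omega>)\<^sup>2) (\<mu> n)"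
      unfolding stoch_dominated_by_law_def
    proof
      fix x :: real
      have e: "{\<omega>\<in>space M. (A_count T S \<beta> n \<omega>)\<^sup>2 \<le> x} = (\<lambda>\<omega>. (A n \<omega>)^2) -` {..x} \<inter> space M"
        unfolding A_def by auto
      show "measure (\<mu> n) {..x} \<le> measure M {\<omega>\<in>space M. (A_count T S \<beta> n \<omega>)\<^sup>2 \<le> x}"
        unfolding e \<mu>_def by (subst measure_distr) auto
    qed
  qed
  have UI: "uniformly_integrable_laws \<mu>"
    unfolding uniformly_integrable_laws_def
  proof (rule tendsto_sandwich[of "\<lambda>_. 0" _ _ "\<lambda>K. ennreal (Bd (jK K))"])
    show "eventually (\<lambda>K. 0 \<le> (SUP n\<in>{1..}. \<integral>\<^sup>+ y. ennreal (\<bar>y\<bar> * indicator {y. \<bar>y\<bar> > K} y) \<partial>\<mu> n)) at_top"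
      by simp
    show "((\<lambda>_. 0::ennreal) \<longlongrightarrow> 0) at_top" by simp
    show "((\<lambda>K. ennreal (Bd (jK K))) \<longlongrightarrow> 0) at_top"
      using tendsto_ennrealI[OF BdK_lim] by simp
    show "eventually (\<lambda>K. (SUP n\<in>{1..}. \<integral>\<^sup>+ y. ennreal (\<bar>y\<bar> * indicator {y. \<bar>y\<bar> > K} y) \<partial>\<mu> n) \<le> ennreal (Bd (jK K))) at_top"
    proof (rule eventually_at_top_linorderI[of 0])
      fix K :: real assume K: "0 \<le> K"
      show "(SUP n\<in>{1..}. \<integral>\<^sup>+ y. ennreal (\<bar>y\<bar> * indicator {y. \<bar>y\<bar> > K} y) \<partial>\<mu> n) \<le> ennreal (Bd (jK K))"
      proof (rule SUP_least)
        fix n :: nat assume "n \<in> {1..}"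
        hence n: "n \<ge> 1" by simp
        have fe: "(\<lambda>y::real. ennreal (\<bar>y\<bar> * indicator {y. \<bar>y\<bar> > K} y)) = (\<lambda>y. ennreal (if K < \<bar>y\<bar> then \<bar>y\<bar> else 0))"
          by (auto simp: fun_eq_iff indicator_def)
        have "(\<integral>\<^sup>+ y. ennreal (\<bar>y\<bar> * indicator {y. \<bar>y\<bar> > K} y) \<partial>\<mu> n)
            = (\<integral>\<^sup>+ \<omega>. ennreal (if K < \<bar>(A n \<omega>)^2\<bar> then \<bar>(A n \<omega>)^2\<bar> else 0) \<partial>M)"
          unfolding \<mu>_def fe by (subst nn_integral_distr) auto
        also have "\<dots> = (\<integral>\<^sup>+ \<omega>. ennreal ((A n \<omega>)^2 * indicator {\<omega>. (A n \<omega>)^2 > K} \<omega>) \<partial>M)"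
          by (intro nn_integral_cong) (auto simp: indicator_def)
        also have "\<dots> = ennreal (P.expectation (\<lambda>\<omega>. (A n \<omega>)^2 * indicator {\<omega>. (A n \<omega>)^2 > K} \<omega>))"
          by (intro nn_integral_eq_integral main'(2)[OF n K]) (auto simp: indicator_def)
        also have "\<dots> \<le> ennreal (Bd (jK K))"
          by (intro ennreal_leI main'(1)[OF n K])
        finally show "(\<integral>\<^sup>+ y. ennreal (\<bar>y\<bar> * indicator {y. \<bar>y\<bar> > K} y) \<partial>\<mu> n) \<le> ennreal (Bd (jK K))" .
      qed
    qed
  qed
  have part2: "\<forall>\<epsilon>>0. (\<lambda>n. P.expectation
               (\<lambda>\<omega>. (A_count T S \<beta> n \<omega>)\<^sup>2 *
                  indicator {\<omega>. (A_count T S \<beta> n \<omega>)\<^sup>2 > \<epsilon> * real n powr (2/3)} \<omega>))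
             \<longlonglongrightarrow> 0"
  proof (intro allI impI)
    fix \<epsilon> :: real assume e: "\<epsilon> > 0"
    define Kn where "Kn n = \<epsilon> * real n powr (2/3)" for n :: nat
    have "filterlim (\<lambda>n::nat. real n powr (2/3)) at_top sequentially" by real_asymp
    hence Kn_lim: "filterlim Kn at_top sequentially"
      unfolding Kn_def by (rule filterlim_tendsto_pos_mult_at_top[OF tendsto_const e])
    have ub: "(\<lambda>n. Bd (jK (Kn n))) \<longlonglongrightarrow> 0"
      using filterlim_compose[OF BdK_lim Kn_lim] by (simp add: o_def)
    show "(\<lambda>n. P.expectation
               (\<lambda>\<omega>. (A_count T S \<beta> n \<omega>)\<^sup>2 *
                  indicator {\<omega>. (A_count T S \<beta> n \<omega>)\<^sup>2 > \<epsilon> * real n powr (2/3)} \<omega>))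
             \<longlonglongrightarrow> 0"
    proof (rule tendsto_sandwich[OF _ _ tendsto_const ub])
      show "eventually (\<lambda>n. 0 \<le> P.expectation
               (\<lambda>\<omega>. (A_count T S \<beta> n \<omega>)\<^sup>2 *
                  indicator {\<omega>. (A_count T S \<beta> n \<omega>)\<^sup>2 > \<epsilon> * real n powr (2/3)} \<omega>)) sequentially"
        by (intro always_eventually allI Bochner_Integration.integral_nonneg) (auto simp: indicator_def)
      show "eventually (\<lambda>n. P.expectation
               (\<lambda>\<omega>. (A_count T S \<beta> n \<omega>)\<^sup>2 *
                  indicator {\<omega>. (A_count T S \<beta> n \<omega>)\<^sup>2 > \<epsilon> * real n powr (2/3)} \<omega>) \<le> Bd (jK (Kn n))) sequentially"
      proof (rule eventually_sequentiallyI[of 1])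
        fix n :: nat assume n: "1 \<le> n"
        have "0 \<le> Kn n" unfolding Kn_def using e by simp
        from main'(1)[OF n this] show "P.expectation
               (\<lambda>\<omega>. (A_count T S \<beta> n \<omega>)\<^sup>2 *
                  indicator {\<omega>. (A_count T S \<beta> n \<omega>)\<^sup>2 > \<epsilon> * real n powr (2/3)} \<omega>) \<le> Bd (jK (Kn n))"
          unfolding A_def Kn_def .
      qed
    qed
  qed
  show ?thesis using part1 UI part2 by blast
qed

end
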